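(* Let $0<a<m$ and consider, on the region $a<\rho<\sqrt{4m^2+a^2}$ of the plane (polar coordinates $(\rho,\varphi)$), the functions $$r=\sqrt{\rho^2-a^2},\qquad K=\frac{2m}{r},\qquad b_\rho=\frac{r}{\rho},\qquad b_\varphi=\frac{a}{\rho},$$ so that $b_\rho^2+b_\varphi^2=1$ and $K>1$ on this region (the ergoregion). The radial parts of the two families of zero-energy null geodesics (parametrized by $t$) are $$\frac{d\rho^+}{dt}=\frac{(Kb_\rho^2-1)\sqrt{K-1}}{-Kb_\rho\sqrt{K-1}-Kb_\varphi},\qquad \frac{d\rho^-}{dt}=\frac{-(Kb_\rho^2-1)\sqrt{K-1}}{Kb_\rho\sqrt{K-1}-Kb_\varphi}=-\frac{\sqrt{K-1}\,\bigl(Kb_\rho\sqrt{K-1}+Kb_\varphi\bigr)}{K^2},$$ (the second expression for $d\rho^-/dt$ being its continuous extension). Then: (i) the denominator of $d\rho^+/dt$ never vanishes on the region, and $d\rho^+/dt=0$ exactly on the two circles where $r=r_\pm:=m\pm\sqrt{m^2-a^2}$ (equivalently $Kb_\rho^2=1$); these two circles are invariant under the $(+)$ flow, i.e. the $(+)$ family produces two horizons; (ii) $d\rho^-/dt<0$ everywhere on the region, so $\rho^-(t)$ is strictly decreasing along every $(-)$ trajectory and the $(-)$ family produces no horizon.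
   Context: This is the $2+1$ reduction of the Kerr metric (Kerr–Schild form) to the equatorial plane $z=0$, $\xi_z=0$, with Hamiltonian $H=\tau^2-\xi_\rho^2-(\xi_\varphi/\rho)^2+K(-\tau+b_\rho\xi_\rho+b_\varphi\xi_\varphi/\rho)^2$. Zero-energy null geodesics are the null bicharacteristics of $H$ with $\tau=0$, reparametrized by the time $t$; on the characteristic set one has $\xi_\rho=\frac{-Kb_\rho b_\varphi\pm\sqrt{K-1}}{Kb_\rho^2-1}\,\xi_\varphi/\rho$, and the sign $\pm$ defines the $(\pm)$ family. A horizon produced by a family is a circle $\{\rho=\text{const}\}$ in the ergoregion that is a closed trajectory (limit cycle) of that family. *)

theory Defs
  imports "HOL-Analysis.Analysis"
begin

text \<open>Equatorial Kerr data in the ergoregion, as functions of the polar radius rho,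
 with parameters a (rotation) and m (mass).\<close>

definition ergo :: "real \<Rightarrow> real \<Rightarrow> real set" where
  "ergo a m = {a <..< sqrt (4 * m^2 + a^2)}"

definition rr :: "real \<Rightarrow> real \<Rightarrow> real" where
  "rr a rho = sqrt (rho^2 - a^2)"

definition KK :: "real \<Rightarrow> real \<Rightarrow> real \<Rightarrow> real" where
  "KK a m rho = 2 * m / rr a rho"

definition b_rho :: "real \<Rightarrow> real \<Rightarrow> real" where
  "b_rho a rho = rr a rho / rho"

definition b_phi :: "real \<Rightarrow> real \<Rightarrow> real" where
  "b_phi a rho = a / rho"

definition den_plus :: "real \<Rightarrow> real \<Rightarrow> real \<Rightarrow> real" where
  "den_plus a m rho = - KK a m rho * b_rho a rho * sqrt (KK a m rho - 1) - KK a m rho * b_phi a rho"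

definition drho_plus :: "real \<Rightarrow> real \<Rightarrow> real \<Rightarrow> real" where
  "drho_plus a m rho = (KK a m rho * (b_rho a rho)^2 - 1) * sqrt (KK a m rho - 1) / den_plus a m rho"

definition den_minus :: "real \<Rightarrow> real \<Rightarrow> real \<Rightarrow> real" where
  "den_minus a m rho = KK a m rho * b_rho a rho * sqrt (KK a m rho - 1) - KK a m rho * b_phi a rho"

definition drho_minus_quot :: "real \<Rightarrow> real \<Rightarrow> real \<Rightarrow> real" where
  "drho_minus_quot a m rho = - (KK a m rho * (b_rho a rho)^2 - 1) * sqrt (KK a m rho - 1) / den_minus a m rho"

definition drho_minus :: "real \<Rightarrow> real \<Rightarrow> real \<Rightarrow> real" where
  "drho_minus a m rho = - sqrt (KK a m rho - 1) *
     (KK a m rho * b_rho a rho * sqrt (KK a m rho - 1) + KK a m rho * b_phi a rho) / (KK a m rho)^2"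

definition r_plus :: "real \<Rightarrow> real \<Rightarrow> real" where
  "r_plus a m = m + sqrt (m^2 - a^2)"

definition r_minus :: "real \<Rightarrow> real \<Rightarrow> real" where
  "r_minus a m = m - sqrt (m^2 - a^2)"

end

theory Submission
  imports Defs
begin

lemma basic:
  fixes a m rho :: real
  assumes a: "0 < a" "a < m" and rho: "rho \<in> ergo a m"
  shows "0 < rr a rho" "rr a rho < 2*m" "(rr a rho)^2 = rho^2 - a^2" "rho > 0"
proof -
  have r1: "a < rho" "rho < sqrt (4*m^2+a^2)" using rho by (auto simp: ergo_def)
  have "a^2 < rho^2" using r1 a by (simp add: power_strict_mono)
  moreover have "rho^2 < 4*m^2+a^2"
  proof -
    have "sqrt (rho^2) < sqrt (4*m^2+a^2)" using r1 a by simp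
    then show ?thesis by (simp only: real_sqrt_less_iff)
  qed
  ultimately have h: "0 < rho^2 - a^2" "rho^2 - a^2 < (2*m)^2" by (auto simp: power_mult_distrib)
  show "0 < rr a rho" using h by (simp add: rr_def)
  show "rr a rho < 2*m" using h a unfolding rr_def
    by (intro real_less_lsqrt) auto
  show "(rr a rho)^2 = rho^2 - a^2" using h by (simp add: rr_def)
  show "rho > 0" using r1 a by simp
qed

lemma pointwise:
  fixes a m rho :: real
  assumes a: "0 < a" "a < m" and rho: "rho \<in> ergo a m"
  shows "(b_rho a rho)^2 + (b_phi a rho)^2 = 1" "KK a m rho > 1"
    "den_plus a m rho < 0" "b_rho a rho > 0" "b_phi a rho > 0"
    "drho_minus a m rho < 0"
    "den_minus a m rho \<noteq> 0 \<Longrightarrow> drho_minus_quot a m rho = drho_minus a m rho"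
    "drho_plus a m rho = 0 \<longleftrightarrow> KK a m rho * (b_rho a rho)^2 = 1"
    "KK a m rho * (b_rho a rho)^2 = 1 \<longleftrightarrow> (rr a rho)^2 - 2*m*rr a rho + a^2 = 0"
proof -
  note bs = basic[OF a rho]
  define r where "r = rr a rho"
  have r: "0 < r" "r < 2*m" "r^2 = rho^2 - a^2" "rho > 0" using bs by (auto simp: r_def)
  show e1: "(b_rho a rho)^2 + (b_phi a rho)^2 = 1"
    using r unfolding b_rho_def b_phi_def r_def[symmetric]
    by (simp add: power_divide field_simps)
  show K1: "KK a m rho > 1" using r unfolding KK_def r_def[symmetric] by simp
  have Kp: "KK a m rho > 0" using K1 by simp
  have S: "sqrt (KK a m rho - 1) > 0" using K1 by simp
  show B: "b_rho a rho > 0" using r unfolding b_rho_def r_def[symmetric] by simp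
  show P: "b_phi a rho > 0" using r a unfolding b_phi_def by simp
  have t1: "KK a m rho * b_rho a rho * sqrt (KK a m rho - 1) > 0" using Kp B S by simp
  have t2: "KK a m rho * b_phi a rho > 0" using Kp P by simp
  show "den_plus a m rho < 0" using t1 t2 unfolding den_plus_def by simp
  have pos: "KK a m rho * b_rho a rho * sqrt (KK a m rho - 1) + KK a m rho * b_phi a rho > 0"
    using t1 t2 by simp
  show "drho_minus a m rho < 0" unfolding drho_minus_def
    using pos S Kp by (simp add: divide_neg_pos mult_pos_pos)
  show "den_minus a m rho \<noteq> 0 \<Longrightarrow> drho_minus_quot a m rho = drho_minus a m rho"
  proof -
    assume d: "den_minus a m rho \<noteq> 0"
    define K where "K = KK a m rho"
    define B where "B = b_rho a rho"
    define P where "P = b_phi a rho"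
    define S where "S = sqrt (KK a m rho - 1)"
    have SS: "S^2 = K - 1" using K1 by (simp add: S_def K_def)
    have e: "B^2 + P^2 = 1" using e1 by (simp add: B_def P_def)
    have dd: "K*B*S - K*P \<noteq> 0" using d by (simp add: den_minus_def K_def B_def P_def S_def)
    have kk: "K \<noteq> 0" using Kp by (simp add: K_def)
    have "(B*S - P)*(B*S+P) = B^2*S^2 - P^2" by (simp add: algebra_simps power2_eq_square)
    also have "\<dots> = B^2*(K-1) - P^2" using SS by simp
    also have "\<dots> = K*B^2 - (B^2+P^2)" by (simp add: algebra_simps)
    also have "\<dots> = K*B^2 - 1" using e by simp
    finally have f: "K*B^2 - 1 = (B*S - P)*(B*S+P)" by simp
    have bsp: "B*S - P \<noteq> 0" using dd by (metis mult.assoc right_diff_distrib mult_zero_right)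
    have "- (K*B^2 - 1)*S / (K*B*S - K*P) = - ((B*S - P)*((B*S+P)*S)) / (K*(B*S-P))"
      by (simp add: f algebra_simps)
    also have "\<dots> = - ((B*S+P)*S) / K" using bsp kk by (simp add: field_simps)
    also have "\<dots> = - S*(K*B*S + K*P)/K^2" using kk by (simp add: field_simps power2_eq_square)
    finally have "- (K*B^2 - 1)*S / (K*B*S - K*P) = - S*(K*B*S + K*P)/K^2" .
    then show ?thesis unfolding drho_minus_quot_def drho_minus_def den_minus_def K_def B_def P_def S_def by simp
  qed
  show "drho_plus a m rho = 0 \<longleftrightarrow> KK a m rho * (b_rho a rho)^2 = 1"
    unfolding drho_plus_def using S \<open>den_plus a m rho < 0\<close> by simp
  show "KK a m rho * (b_rho a rho)^2 = 1 \<longleftrightarrow> (rr a rho)^2 - 2*m*rr a rho + a^2 = 0"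
  proof -
    have rh: "rho^2 = r^2 + a^2" using r by simp
    have rp: "r^2 + a^2 > 0" using r by simp
    have "KK a m rho * (b_rho a rho)^2 = 2*m/r * (r^2 / rho^2)"
      unfolding KK_def b_rho_def r_def[symmetric] by (simp add: power_divide)
    also have "\<dots> = 2*m*r / rho^2"
      using \<open>0 < r\<close> by (simp add: power2_eq_square)
    also have "\<dots> = 2*m*r / (r^2+a^2)" by (simp only: rh)
    finally have "KK a m rho * (b_rho a rho)^2 = 2*m*r / (r^2+a^2)" .
    then have "KK a m rho * (b_rho a rho)^2 = 1 \<longleftrightarrow> 2*m*r = r^2+a^2"
      using rp by (auto simp: divide_eq_1_iff)
    also have "\<dots> \<longleftrightarrow> r^2 - 2*m*r + a^2 = 0" by auto
    finally show ?thesis unfolding r_def .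
  qed
qed

lemma circle:
  fixes a m r :: real
  assumes a: "0 < a" "a < m" and r: "0 < r" "r < 2*m"
  shows "sqrt (r^2+a^2) \<in> ergo a m" "rr a (sqrt (r^2+a^2)) = r"
proof -
  have "a < sqrt (r^2+a^2)" using r by (intro real_less_rsqrt) simp
  moreover have "r^2 < (2*m)^2" using r by (intro power_strict_mono) auto
  then have "sqrt (r^2+a^2) < sqrt (4*m^2+a^2)" by (simp add: power_mult_distrib)
  ultimately show "sqrt (r^2+a^2) \<in> ergo a m" by (simp add: ergo_def)
  show "rr a (sqrt (r^2+a^2)) = r" using r unfolding rr_def by simp
qed

lemma roots:
  fixes a m r :: real
  assumes a: "0 < a" "a < m"
  shows "r^2 - 2*m*r + a^2 = 0 \<longleftrightarrow> (r = r_plus a m \<or> r = r_minus a m)"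
proof -
  define s where "s = sqrt (m^2-a^2)"
  have "a^2 < m^2" using a by (intro power_strict_mono) auto
  then have ss: "s^2 = m^2-a^2" by (simp add: s_def)
  have "r^2 - 2*m*r + a^2 = (r - (m+s))*(r-(m-s))"
    using ss by (simp add: algebra_simps power2_eq_square)
  then show ?thesis by (simp add: r_plus_def r_minus_def s_def[symmetric])
qed

lemma rpm:
  fixes a m :: real
  assumes a: "0 < a" "a < m"
  shows "0 < r_minus a m" "r_minus a m < r_plus a m" "r_plus a m < 2*m"
proof -
  define s where "s = sqrt (m^2-a^2)"
  have "a^2 < m^2" using a by (intro power_strict_mono) auto
  then have "0 < s" by (simp add: s_def)
  moreover have "s < m" unfolding s_def using a by (intro real_less_lsqrt) auto
  ultimately show "0 < r_minus a m" "r_minus a m < r_plus a m" "r_plus a m < 2*m"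
    by (auto simp: r_plus_def r_minus_def s_def[symmetric])
qed

lemma mono_part:
  fixes a m :: real and f :: "real \<Rightarrow> real" and I :: "real set"
  assumes a: "0 < a" "a < m" and I: "is_interval I"
   and d: "\<forall>t \<in> I. f t \<in> ergo a m \<and> (f has_real_derivative drho_minus a m (f t)) (at t within I)"
   and st: "s \<in> I" "t \<in> I" "s < t"
  shows "f t < f s"
proof -
  have I1: "\<forall>a\<in>I. \<forall>b\<in>I. \<forall> x. a \<le> x \<and> x \<le> b \<longrightarrow> x \<in> I"
    using I by (simp only: is_interval_1)
  have sub: "{s..t} \<subseteq> I"
  proof
    fix x assume "x \<in> {s..t}"
    then have "s \<le> x \<and> x \<le> t" by (simp only: atLeastAtMost_iff)
    then show "x \<in> I" using I1 st(1,2) by blast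
  qed
  have "\<exists>x\<in>{s<..<t}. f t - f s = (\<lambda>h. drho_minus a m (f x) * h) (t - s)"
  proof (rule mvt_simple[OF st(3)])
    fix x assume "s \<le> x" "x \<le> t"
    then have "x \<in> {s..t}" by (simp only: atLeastAtMost_iff)
    then have "x \<in> I" using sub by (rule subsetD[rotated])
    then have "(f has_real_derivative drho_minus a m (f x)) (at x within {s..t})"
      using d sub by (intro DERIV_subset[OF _ sub]) simp
    then show "(f has_derivative (\<lambda>h. drho_minus a m (f x) * h)) (at x within {s..t})"
      by (simp add: has_field_derivative_def)
  qed
  then obtain x where x: "x \<in> {s<..<t}" "f t - f s = drho_minus a m (f x) * (t - s)" by auto
  have "x \<in> I" using x sub by auto
  then have "f x \<in> ergo a m" using d by simp
  then have "drho_minus a m (f x) < 0" by (rule pointwise(6)[OF a])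
  then have "drho_minus a m (f x) * (t - s) < 0" using st by (simp add: mult_neg_pos)
  then show ?thesis using x by simp
qed

theorem theorem3p1:
  fixes a m :: real
  assumes "0 < a" and "a < m"
  shows
    \<comment> \<open>ergoregion facts\<close>
    "(\<forall>rho \<in> ergo a m. (b_rho a rho)^2 + (b_phi a rho)^2 = 1 \<and> KK a m rho > 1)
     \<comment> \<open>(i) denominator never vanishes; zero set of d rho^+/dt\<close>
     \<and> (\<forall>rho \<in> ergo a m. den_plus a m rho \<noteq> 0)
     \<and> (\<forall>rho \<in> ergo a m. drho_plus a m rho = 0 \<longleftrightarrow>
            (rr a rho = r_plus a m \<or> rr a rho = r_minus a m))
     \<and> (\<forall>rho \<in> ergo a m. drho_plus a m rho = 0 \<longleftrightarrow> KK a m rho * (b_rho a rho)^2 = 1)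
     \<comment> \<open>(i) two distinct circles in the ergoregion, invariant under the (+) flow\<close>
     \<and> (\<exists>rho1 \<in> ergo a m. \<exists>rho2 \<in> ergo a m. rho1 \<noteq> rho2 \<and>
            rr a rho1 = r_plus a m \<and> rr a rho2 = r_minus a m \<and>
            (\<forall>t. ((\<lambda>s::real. rho1) has_real_derivative drho_plus a m rho1) (at t)) \<and>
            (\<forall>t. ((\<lambda>s::real. rho2) has_real_derivative drho_plus a m rho2) (at t)))
     \<comment> \<open>(ii) continuous extension and strict negativity of d rho^-/dt\<close>
     \<and> (\<forall>rho \<in> ergo a m. den_minus a m rho \<noteq> 0 \<longrightarrow>
            drho_minus_quot a m rho = drho_minus a m rho)
     \<and> (\<forall>rho \<in> ergo a m. drho_minus a m rho < 0)
     \<and> (\<forall>(f :: real \<Rightarrow> real) (I :: real set). is_interval I \<longrightarrow>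
            (\<forall>t \<in> I. f t \<in> ergo a m \<and>
               (f has_real_derivative drho_minus a m (f t)) (at t within I)) \<longrightarrow>
            (\<forall>s \<in> I. \<forall>t \<in> I. s < t \<longrightarrow> f t < f s))
     \<comment> \<open>(ii) no horizon: no circle in the ergoregion is a stationary (closed) (-) trajectory\<close>
     \<and> \<not> (\<exists>rho \<in> ergo a m. \<forall>t. ((\<lambda>s::real. rho) has_real_derivative drho_minus a m rho) (at t))"
proof -
  note P = pointwise[OF assms]
  note R = rpm[OF assms]
  have c3: "\<forall>rho \<in> ergo a m. drho_plus a m rho = 0 \<longleftrightarrow>
            (rr a rho = r_plus a m \<or> rr a rho = r_minus a m)"
    using P(8,9) roots[OF assms] by blast
  define rho1 where "rho1 = sqrt ((r_plus a m)^2 + a^2)"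
  define rho2 where "rho2 = sqrt ((r_minus a m)^2 + a^2)"
  have e1: "rho1 \<in> ergo a m" "rr a rho1 = r_plus a m"
    using circle[OF assms, of "r_plus a m"] R unfolding rho1_def by auto
  have e2: "rho2 \<in> ergo a m" "rr a rho2 = r_minus a m"
    using circle[OF assms, of "r_minus a m"] R unfolding rho2_def by auto
  have z1: "drho_plus a m rho1 = 0" using c3 e1 by blast
  have z2: "drho_plus a m rho2 = 0" using c3 e2 by blast
  have c5: "\<exists>rho1 \<in> ergo a m. \<exists>rho2 \<in> ergo a m. rho1 \<noteq> rho2 \<and>
            rr a rho1 = r_plus a m \<and> rr a rho2 = r_minus a m \<and>
            (\<forall>t. ((\<lambda>s::real. rho1) has_real_derivative drho_plus a m rho1) (at t)) \<and>
            (\<forall>t. ((\<lambda>s::real. rho2) has_real_derivative drho_plus a m rho2) (at t))"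
  proof (intro bexI conjI allI)
    show "rho1 \<noteq> rho2" using e1 e2 R by auto
  qed (use e1 e2 z1 z2 in auto)
  have c9: "\<not> (\<exists>rho \<in> ergo a m. \<forall>t. ((\<lambda>s::real. rho) has_real_derivative drho_minus a m rho) (at t))"
  proof
    assume "\<exists>rho \<in> ergo a m. \<forall>t. ((\<lambda>s::real. rho) has_real_derivative drho_minus a m rho) (at t)"
    then obtain rho where rho: "rho \<in> ergo a m" "((\<lambda>s::real. rho) has_real_derivative drho_minus a m rho) (at 0)" by blast
    have "((\<lambda>s::real. rho) has_real_derivative 0) (at 0)" by simp
    then have "drho_minus a m rho = 0" using rho(2) DERIV_unique by blast
    then show False using P(6)[OF rho(1)] by simp
  qed
  have c1: "\<forall>rho \<in> ergo a m. (b_rho a rho)^2 + (b_phi a rho)^2 = 1 \<and> KK a m rho > 1"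
    using P(1,2) by blast
  have c2: "\<forall>rho \<in> ergo a m. den_plus a m rho \<noteq> 0"
    using P(3) by fastforce
  have c4: "\<forall>rho \<in> ergo a m. drho_plus a m rho = 0 \<longleftrightarrow> KK a m rho * (b_rho a rho)^2 = 1"
    using P(8) by blast
  have c6: "\<forall>rho \<in> ergo a m. den_minus a m rho \<noteq> 0 \<longrightarrow>
            drho_minus_quot a m rho = drho_minus a m rho"
    using P(7) by blast
  have c7: "\<forall>rho \<in> ergo a m. drho_minus a m rho < 0"
    using P(6) by blast
  have c8: "\<forall>(f :: real \<Rightarrow> real) (I :: real set). is_interval I \<longrightarrow>
            (\<forall>t \<in> I. f t \<in> ergo a m \<and>
               (f has_real_derivative drho_minus a m (f t)) (at t within I)) \<longrightarrow>
            (\<forall>s \<in> I. \<forall>t \<in> I. s < t \<longrightarrow> f t < f s)"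
  proof (intro allI impI ballI)
    fix f :: "real \<Rightarrow> real" and I :: "real set" and s t
    assume "is_interval I" "\<forall>t \<in> I. f t \<in> ergo a m \<and>
               (f has_real_derivative drho_minus a m (f t)) (at t within I)"
      "s \<in> I" "t \<in> I" "s < t"
    then show "f t < f s" by (rule mono_part[OF assms])
  qed
  show ?thesis
    by (intro conjI c1 c2 c3 c4 c5 c6 c7 c8 c9)
qed

end
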